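(* Let $(z,x^1,\dots,x^{2k})$ be coordinates on a neighborhood of the origin in $\mathbf{C}^{2k+1}$ ($k\ge1$), and let $\omega=dz+\alpha+z\beta$ be a germ at the origin of a singular contact form of the first type whose Martinet hypersurface is $S=\{z=0\}$ and is structurally smooth, where $\alpha=\sum_{i=1}^{2k}a_i(x)\,dx^i$ (coefficients independent of $z$) and $\beta=\sum_{i=1}^{2k}b_i(z,x)\,dx^i$. Put $Z=\partial/\partial z$ and write a germ of holomorphic vector field $X$ at the origin as $$X=fZ+\sum_{i=1}^{2k}s_i\Big(\frac{\partial}{\partial x^i}-(a_i+zb_i)Z\Big)$$ with holomorphic germs $f,s_1,\dots,s_{2k}$ (so $f=\omega(X)$). Then $X$ is an infinitesimal contact transformation of $\omega$ (i.e. $\mathcal{L}_X\omega=h\omega$ for some holomorphic germ $h$) if and only if $$\imath_Z\imath_X(\omega\wedge d\omega)=\imath_Z\big(f\,d\omega+\omega\wedge df\big).$$ Furthermore, in this case $$\mathcal{L}_X\omega=\Big(\frac{\partial f}{\partial z}-\sum_{m=1}^{2k}s_mb_m-z\sum_{m=1}^{2k}s_m\frac{\partial b_m}{\partial z}\Big)\omega.$$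
   Context: Here "singular contact form of the first type with structurally smooth Martinet hypersurface $S=\{z=0\}$" means: $\omega$ is a nowhere vanishing holomorphic $1$-form with $\omega\wedge(d\omega)^k=H\,dz\wedge dx^1\wedge\cdots\wedge dx^{2k}$, where the zero set of $H$ (the Martinet hypersurface) is $\{z=0\}$ and $dH\neq0$ at its points. $\imath$ denotes interior product and $\mathcal{L}$ the Lie derivative. *)

theory Defs
  imports "HOL-Analysis.Analysis"
begin

text \<open>Points of C^(2k+1): pairs (z, x) with x indexed by a finite type 'm of cardinality 2k.
  Differential forms (of any degree p) are represented pointwise as functions of the point and
  of a list of p tangent vectors (determinant convention for wedge and d).\<close>

type_synonym 'm pt = "complex \<times> (complex ^ 'm)"
type_synonym 'm form = "'m::finite pt \<Rightarrow> 'm pt list \<Rightarrow> complex"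

definition cscale :: "complex \<Rightarrow> 'm::finite pt \<Rightarrow> 'm pt" where
  "cscale c v = (c * fst v, \<chi> i. c * (snd v $ i))"

definition holo_germ :: "('m::finite pt \<Rightarrow> complex) \<Rightarrow> bool" where
  "holo_germ g \<longleftrightarrow> (\<exists>U. open U \<and> 0 \<in> U \<and>
     (\<forall>p\<in>U. \<exists>D. (g has_derivative D) (at p) \<and> (\<forall>c v. D (cscale c v) = c * D v)))"

definition dirderiv :: "('m::finite pt \<Rightarrow> complex) \<Rightarrow> 'm pt \<Rightarrow> 'm pt \<Rightarrow> complex" where
  "dirderiv g p v = deriv (\<lambda>t. g (p + cscale t v)) 0"

text \<open>Exterior derivative (evaluated on constant vector fields).\<close>
definition ext_d :: "'m::finite form \<Rightarrow> 'm form" where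
  "ext_d \<alpha> p vs = (\<Sum>i<length vs. (-1) ^ i * dirderiv (\<lambda>q. \<alpha> q (nths vs (- {i}))) p (vs ! i))"

definition wedge :: "nat \<Rightarrow> 'm::finite form \<Rightarrow> 'm form \<Rightarrow> 'm form" where
  "wedge r \<alpha> \<beta> p vs = (\<Sum>I\<in>{I. I \<subseteq> {..<length vs} \<and> card I = r}.
      (-1) ^ (\<Sum>I - r * (r - 1) div 2) * \<alpha> p (nths vs I) * \<beta> p (nths vs (- I)))"

primrec wpow2 :: "'m::finite form \<Rightarrow> nat \<Rightarrow> 'm form" where
  "wpow2 \<eta> 0 = (\<lambda>p vs. 1)"
| "wpow2 \<eta> (Suc j) = wedge 2 \<eta> (wpow2 \<eta> j)"

definition iprod :: "('m::finite pt \<Rightarrow> 'm pt) \<Rightarrow> 'm form \<Rightarrow> 'm form" where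
  "iprod X \<alpha> p vs = \<alpha> p (X p # vs)"

definition fscale :: "('m::finite pt \<Rightarrow> complex) \<Rightarrow> 'm form \<Rightarrow> 'm form" where
  "fscale g \<alpha> p vs = g p * \<alpha> p vs"

definition fadd :: "'m::finite form \<Rightarrow> 'm form \<Rightarrow> 'm form" where
  "fadd \<alpha> \<beta> p vs = \<alpha> p vs + \<beta> p vs"

definition zero_form_of :: "('m::finite pt \<Rightarrow> complex) \<Rightarrow> 'm form" where
  "zero_form_of g p vs = g p"

definition vfderiv :: "('m::finite pt \<Rightarrow> 'm pt) \<Rightarrow> 'm pt \<Rightarrow> 'm pt \<Rightarrow> 'm pt" where
  "vfderiv X p v = (dirderiv (\<lambda>q. fst (X q)) p v, \<chi> i. dirderiv (\<lambda>q. snd (X q) $ i) p v)"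

text \<open>Lie derivative of a 1-form:  (L_X w)(Y) = X(w(Y)) - w([X,Y]), Y constant, so [X,Y] = - D_Y X.\<close>
definition lie1 :: "('m::finite pt \<Rightarrow> 'm pt) \<Rightarrow> 'm form \<Rightarrow> 'm form" where
  "lie1 X \<omega> p vs = dirderiv (\<lambda>q. \<omega> q vs) p (X p) + \<omega> p [vfderiv X p (hd vs)]"

definition germ_eq :: "nat \<Rightarrow> 'm::finite form \<Rightarrow> 'm form \<Rightarrow> bool" where
  "germ_eq n \<alpha> \<beta> \<longleftrightarrow> (\<exists>U. open U \<and> (0::'m pt) \<in> U \<and>
     (\<forall>p\<in>U. \<forall>vs. length vs = n \<longrightarrow> \<alpha> p vs = \<beta> p vs))"

definition ez :: "'m::finite pt" where "ez = (1, 0)"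
definition ex :: "'m::finite \<Rightarrow> 'm pt" where "ex i = (0, axis i 1)"
definition frame :: "'m::{finite,linorder} pt list" where
  "frame = ez # map ex (sorted_list_of_set UNIV)"

text \<open>Martinet function H: w /\ (dw)^k = H dz /\ dx^1 /\ ... /\ dx^2k.\<close>
definition martinet_fn :: "nat \<Rightarrow> 'm::{finite,linorder} form \<Rightarrow> 'm pt \<Rightarrow> complex" where
  "martinet_fn k \<omega> p = wedge 1 \<omega> (wpow2 (ext_d \<omega>) k) p frame"

definition sing_contact_first_type_S :: "nat \<Rightarrow> 'm::{finite,linorder} form \<Rightarrow> bool" where
  "sing_contact_first_type_S k \<omega> \<longleftrightarrow> (\<exists>U. open U \<and> 0 \<in> U \<and>
     (\<forall>p\<in>U. \<exists>v. \<omega> p [v] \<noteq> 0) \<and>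
     (\<forall>p\<in>U. martinet_fn k \<omega> p = 0 \<longleftrightarrow> fst p = 0) \<and>
     (\<forall>p\<in>U. fst p = 0 \<longrightarrow> (\<exists>v. dirderiv (martinet_fn k \<omega>) p v \<noteq> 0)))"

end

theory Submission
  imports Defs "HOL-Complex_Analysis.Complex_Analysis"
begin

lemma norm_cvec: "norm (\<chi> i. c * (x::complex^'m::finite) $ i) = cmod c * norm x"
proof -
  have "norm (\<chi> i. c * x $ i) = L2_set (\<lambda>i. cmod c * cmod (x $ i)) UNIV"
    by (simp add: norm_vec_def norm_mult)
  also have "\<dots> = cmod c * L2_set (\<lambda>i. cmod (x $ i)) UNIV"
    by (simp add: L2_set_right_distrib)
  finally show ?thesis by (simp add: norm_vec_def)
qed

lemma norm_cscale: "norm (cscale c v) = cmod c * norm v"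
proof -
  have "norm (cscale c v) = sqrt ((cmod c * cmod (fst v))\<^sup>2 + (cmod c * norm (snd v))\<^sup>2)"
    by (simp add: cscale_def norm_Pair norm_cvec norm_mult)
  also have "\<dots> = cmod c * sqrt ((cmod (fst v))\<^sup>2 + (norm (snd v))\<^sup>2)"
    by (simp add: power_mult_distrib distrib_left[symmetric] real_sqrt_mult)
  finally show ?thesis by (simp add: norm_Pair[symmetric])
qed

lemma cscale_add: "cscale (s + t) w = cscale s w + cscale t w"
  by (simp add: cscale_def vec_eq_iff distrib_right)

lemma cscale_scaleR: "cscale (scaleR r t) w = scaleR r (cscale t w)"
  by (simp add: cscale_def vec_eq_iff vector_scaleR_component)

lemma cscale_0[simp]: "cscale 0 w = 0"
  by (simp add: cscale_def vec_eq_iff zero_prod_def)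

lemma cscale_1[simp]: "cscale 1 w = w"
  by (simp add: cscale_def vec_eq_iff)

lemma cscale_mult: "cscale c (cscale d w) = cscale (c * d) w"
  by (simp add: cscale_def vec_eq_iff)

lemma bl_cscale: "bounded_linear (\<lambda>t. cscale t w)"
  apply (rule bounded_linear_intro[where K="norm w"])
  by (auto simp: cscale_add cscale_scaleR norm_cscale)

lemma line_has_derivative: "((\<lambda>t. p + cscale t w) has_derivative (\<lambda>t. cscale t w)) (at t0)"
  by (auto intro!: derivative_eq_intros bounded_linear.has_derivative[OF bl_cscale])

definition cdiffat :: "('m::finite pt \<Rightarrow> complex) \<Rightarrow> 'm pt \<Rightarrow> ('m pt \<Rightarrow> complex) \<Rightarrow> bool" where
  "cdiffat g p D \<longleftrightarrow> (g has_derivative D) (at p) \<and> (\<forall>c v. D (cscale c v) = c * D v)"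

lemma line_field_deriv:
  assumes "cdiffat g (p + cscale t0 w) D"
  shows "((\<lambda>t. g (p + cscale t w)) has_field_derivative D w) (at t0)"
proof -
  have "((g \<circ> (\<lambda>t. p + cscale t w)) has_derivative (D \<circ> (\<lambda>t. cscale t w))) (at t0)"
    using assms unfolding cdiffat_def
    by (intro diff_chain_at line_has_derivative) auto
  moreover have "D \<circ> (\<lambda>t. cscale t w) = (*) (D w)"
  proof
    fix t show "(D \<circ> (\<lambda>t. cscale t w)) t = (*) (D w) t"
      using assms unfolding cdiffat_def o_def by (metis mult.commute)
  qed
  ultimately show ?thesis by (simp add: has_field_derivative_def o_def)
qed

lemma dirderiv_eq:
  assumes "cdiffat g p D"
  shows "dirderiv g p w = D w"
  unfolding dirderiv_def
  by (rule DERIV_imp_deriv, rule line_field_deriv) (use assms in simp)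

lemma taylor1:
  fixes \<phi> :: "complex \<Rightarrow> complex"
  assumes holo: "\<phi> holomorphic_on ball c \<rho>" and rho: "\<rho> > 0"
    and bnd: "\<And>t. t \<in> ball c \<rho> \<Longrightarrow> cmod (\<phi> t) \<le> M"
    and tc: "cmod (t - c) \<le> \<rho>/2"
  shows "cmod (\<phi> t - \<phi> c - deriv \<phi> c * (t - c)) \<le> 32 * M * cmod (t - c)^2 / \<rho>^2"
proof -
  define S where "S = cball c (\<rho>/2)"
  have SB: "S \<subseteq> ball c \<rho>" using rho by (auto simp: S_def)
  have der: "((deriv ^^ i) \<phi> has_field_derivative (deriv ^^ (Suc i)) \<phi> x) (at x within S)"
    if "x \<in> S" for i x
  proof -
    have "(deriv ^^ i) \<phi> holomorphic_on ball c \<rho>"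
      by (rule holomorphic_higher_deriv[OF holo]) simp
    then show ?thesis using that SB by (auto intro!: holomorphic_derivI)
  qed
  have B: "cmod ((deriv ^^ 2) \<phi> x) \<le> 32 * M / \<rho>^2" if "x \<in> S" for x
  proof -
    have sub: "cball x (\<rho>/4) \<subseteq> ball c \<rho>"
    proof
      fix y assume "y \<in> cball x (\<rho>/4)"
      then have "cmod (x - y) \<le> \<rho>/4" by (simp add: dist_norm)
      moreover have "cmod (c - x) \<le> \<rho>/2" using that by (simp add: S_def dist_norm)
      moreover have "cmod (c - y) \<le> cmod (c - x) + cmod (x - y)"
        using norm_triangle_ineq[of "c - x" "x - y"] by simp
      ultimately show "y \<in> ball c \<rho>" using rho by (simp add: dist_norm)
    qed
    have "cmod ((deriv ^^ 2) \<phi> x) \<le> fact 2 * M / (\<rho>/4)^2"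
    proof (rule Cauchy_inequality)
      show "\<phi> holomorphic_on ball x (\<rho> / 4)"
        using holo sub ball_subset_cball holomorphic_on_subset by blast
      show "continuous_on (cball x (\<rho> / 4)) \<phi>"
        using holo sub holomorphic_on_imp_continuous_on holomorphic_on_subset by blast
      show "0 < \<rho>/4" using rho by simp
      show "cmod (\<phi> y) \<le> M" if "cmod (x - y) = \<rho>/4" for y
        using sub that by (intro bnd) (auto simp: dist_norm)
    qed
    also have "\<dots> = 32 * M / \<rho>^2" by (simp add: power2_eq_square field_simps)
    finally show ?thesis .
  qed
  have "cmod ((deriv ^^ 0) \<phi> t - (\<Sum>i\<le>1. (deriv ^^ i) \<phi> c * (t - c) ^ i / fact i))
        \<le> 32 * M / \<rho>^2 * cmod (t - c) ^ Suc 1 / fact 1"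
    by (rule complex_Taylor[where S=S]) (use der B tc rho in \<open>auto simp: S_def dist_norm norm_minus_commute numeral_2_eq_2\<close>)
  then show ?thesis by (simp add: algebra_simps power2_eq_square)
qed

definition Dof :: "('m::finite pt \<Rightarrow> complex) \<Rightarrow> 'm pt \<Rightarrow> ('m pt \<Rightarrow> complex)" where
  "Dof g q = (SOME D. cdiffat g q D)"

lemma Dof: "\<exists>D. cdiffat g q D \<Longrightarrow> cdiffat g q (Dof g q)"
  unfolding Dof_def by (rule someI_ex[of "cdiffat g q"])

lemma cdiffat_0: "cdiffat g q D \<Longrightarrow> D 0 = 0"
  unfolding cdiffat_def using cscale_0[of 0] by (metis mult_zero_left)

lemma cdiffat_cont: "cdiffat g q D \<Longrightarrow> isCont g q"
  unfolding cdiffat_def using has_derivative_continuous by blast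

lemma line_holo:
  assumes cd: "\<forall>p\<in>U. \<exists>D. cdiffat g p D" and A: "\<And>h. h \<in> A \<Longrightarrow> q + cscale h w \<in> U" and "open A"
  shows "(\<lambda>h. g (q + cscale h w)) holomorphic_on A"
  unfolding holomorphic_on_open[OF \<open>open A\<close>]
proof
  fix h assume "h \<in> A"
  then have "cdiffat g (q + cscale h w) (Dof g (q + cscale h w))" using cd A Dof by blast
  then show "\<exists>f'. ((\<lambda>h. g (q + cscale h w)) has_field_derivative f') (at h)"
    using line_field_deriv by blast
qed

lemma line_cont:
  assumes cd: "\<forall>p\<in>U. \<exists>D. cdiffat g p D" and A: "\<And>h. h \<in> A \<Longrightarrow> q + cscale h w \<in> U"
  shows "continuous_on A (\<lambda>h. g (q + cscale h w))"
proof (intro continuous_at_imp_continuous_on ballI)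
  fix h assume "h \<in> A"
  then have "cdiffat g (q + cscale h w) (Dof g (q + cscale h w))" using cd A Dof by blast
  then show "isCont (\<lambda>h. g (q + cscale h w)) h"
    using line_field_deriv DERIV_isCont by blast
qed

lemma line_deriv0:
  assumes "cdiffat g q D"
  shows "deriv (\<lambda>t. g (q + cscale t w)) 0 = D w"
  by (rule DERIV_imp_deriv, rule line_field_deriv) (use assms in simp)

lemma norm_ez[simp]: "norm (ez :: 'm::finite pt) = 1"
  by (simp add: ez_def norm_Pair)

lemma norm_line_le: "norm (q + cscale t u) \<le> norm q + cmod t * norm u"
  by (metis norm_cscale norm_triangle_ineq)

lemma deriv_holo_main:
  fixes g :: "'m::finite pt \<Rightarrow> complex"
  assumes U: "open U" "0 \<in> U" and cd: "\<forall>p\<in>U. \<exists>D. cdiffat g p D"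
  shows "\<exists>V. open V \<and> 0 \<in> V \<and> (\<forall>p\<in>V. \<exists>D. cdiffat (\<lambda>q. dirderiv g q ez) p D)"
proof -
  obtain R where R: "R > 0" "cball 0 R \<subseteq> U" using U open_contains_cball by blast
  have "continuous_on (cball 0 R) g"
    using R cd cdiffat_cont by (blast intro: continuous_at_imp_continuous_on)
  then have "bounded (g ` cball 0 R)" by (intro compact_imp_bounded compact_continuous_image) auto
  then obtain M0 where M0: "\<And>q. q \<in> cball 0 R \<Longrightarrow> cmod (g q) \<le> M0"
    unfolding bounded_iff by blast
  define M where "M = max M0 1"
  have M: "M > 0" "\<And>q. q \<in> cball 0 R \<Longrightarrow> cmod (g q) \<le> M"
    using M0 unfolding M_def by (simp, meson le_max_iff_disj)
  define Dg where "Dg = Dof g"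
  have cdD: "cdiffat g q (Dg q)" if "q \<in> U" for q
    using cd that Dof unfolding Dg_def by blast
  have inU: "q + cscale t u \<in> ball 0 R"
    if "norm q < R/2" "norm u \<le> 1" "cmod t < R/2" for q u t
  proof -
    have "cmod t * norm u \<le> cmod t" using that mult_left_le[of "norm u" "cmod t"] by simp
    then show ?thesis using norm_line_le[of q t u] that by (simp add: mem_ball_0)
  qed
  have inU': "q + cscale t u \<in> U"
    if "norm q < R/2" "norm u \<le> 1" "cmod t < R/2" for q u t
    using inU[OF that] R by auto
  have qU: "q \<in> U" if "norm q < R/2" for q
    using inU'[OF that, of 0 0] R by simp
  have stepA: "cmod (Dg q u) \<le> 4 * M / R" if q: "norm q < R/2" and u: "norm u \<le> 1" for q u
  proof -
    have hol: "(\<lambda>t. g (q + cscale t u)) holomorphic_on ball 0 (R/4)"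
      by (rule line_holo[OF cd], rule inU'[OF q u]) (use R in \<open>auto simp: mem_ball_0\<close>)
    have con: "continuous_on (cball 0 (R/4)) (\<lambda>t. g (q + cscale t u))"
      by (rule line_cont[OF cd], rule inU'[OF q u]) (use R in \<open>auto simp: mem_cball_0\<close>)
    have "cmod ((deriv ^^ 1) (\<lambda>t. g (q + cscale t u)) 0) \<le> fact 1 * M / (R/4)^1"
    proof (rule Cauchy_inequality[OF hol con])
      show "0 < R/4" using R by simp
      fix x :: complex assume "cmod (0 - x) = R/4"
      then have "q + cscale x u \<in> ball 0 R" using inU[OF q u, of x] R by simp
      then show "cmod (g (q + cscale x u)) \<le> M" using M(2) by auto
    qed
    moreover have "deriv (\<lambda>t. g (q + cscale t u)) 0 = Dg q u"
      by (rule line_deriv0[OF cdD[OF qU[OF q]]])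
    ultimately show ?thesis by (simp add: mult.commute)
  qed
  have stepB: "cmod (g (q + cscale t u) - g q - Dg q u * t) \<le> 512 * M * (cmod t)^2 / R^2"
    if q: "norm q < R/2" and u: "norm u \<le> 1" and t: "cmod t \<le> R/8" for q u t
  proof -
    have hol: "(\<lambda>t. g (q + cscale t u)) holomorphic_on ball 0 (R/4)"
      by (rule line_holo[OF cd], rule inU'[OF q u]) (use R in \<open>auto simp: mem_ball_0\<close>)
    have "cmod (g (q + cscale t u) - g (q + cscale 0 u) - deriv (\<lambda>t. g (q + cscale t u)) 0 * (t - 0))
          \<le> 32 * M * cmod (t - 0)^2 / (R/4)^2"
    proof (rule taylor1[OF hol])
      show "0 < R/4" using R by simp
      show "cmod (t - 0) \<le> R / 4 / 2" using t by simp
      fix x :: complex assume "x \<in> ball 0 (R/4)"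
      then have "q + cscale x u \<in> ball 0 R" using inU[OF q u, of x] R by (simp add: mem_ball_0)
      then show "cmod (g (q + cscale x u)) \<le> M" using M(2) by auto
    qed
    moreover have "deriv (\<lambda>t. g (q + cscale t u)) 0 = Dg q u"
      by (rule line_deriv0[OF cdD[OF qU[OF q]]])
    ultimately show ?thesis by (simp add: power2_eq_square mult_ac)
  qed
  have stepC: "(\<lambda>h. Dg (p + cscale h ez) u) holomorphic_on ball 0 (R/8)"
    if p: "norm p < R/4" and u: "norm u \<le> 1" for p u
  proof -
    define F where "F t h = (g (p + cscale h ez + cscale t u) - g (p + cscale h ez)) / t" for t h
    have nq: "norm (p + cscale h ez) < R/2" if "cmod h \<le> R/8" for h
      using norm_line_le[of p h ez] that p R by simp
    have nq2: "norm (p + cscale t u) < R/2" if "cmod t < R/8" for t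
    proof -
      have "cmod t * norm u \<le> cmod t" using u mult_left_le[of "norm u" "cmod t"] by simp
      then show ?thesis using norm_line_le[of p t u] that p R by linarith
    qed
    have pR2: "norm p < R/2" using p R by simp
    have ev: "\<forall>\<^sub>F t in at 0. continuous_on (cball 0 (R/8)) (F t) \<and> F t holomorphic_on ball 0 (R/8)"
      unfolding eventually_at
    proof (intro exI[of _ "R/8"] conjI ballI impI)
      show "0 < R/8" using R by simp
      fix t :: complex assume "t \<noteq> 0 \<and> dist t 0 < R/8"
      then have t: "t \<noteq> 0" "cmod t < R/8" by auto
      have eq: "p + cscale h ez + cscale t u = (p + cscale t u) + cscale h ez" for h
        by (simp add: algebra_simps)
      have h1: "(\<lambda>h. g ((p + cscale t u) + cscale h ez)) holomorphic_on ball 0 (R/4)"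
        by (rule line_holo[OF cd], rule inU'[OF nq2[OF t(2)]]) (use R in \<open>auto simp: mem_ball_0\<close>)
      have h2: "(\<lambda>h. g (p + cscale h ez)) holomorphic_on ball 0 (R/4)"
        by (rule line_holo[OF cd], rule inU'[OF pR2]) (use R in \<open>auto simp: mem_ball_0\<close>)
      have hF: "F t holomorphic_on ball 0 (R/4)"
        unfolding F_def eq using h1 h2 t by (intro holomorphic_intros) auto
      have sub: "cball 0 (R/8) \<subseteq> ball 0 (R/4)" using R by (auto simp: mem_ball_0 mem_cball_0)
      show "continuous_on (cball 0 (R/8)) (F t)"
        using hF sub holomorphic_on_imp_continuous_on holomorphic_on_subset by blast
      show "F t holomorphic_on ball 0 (R/8)"
        using hF sub ball_subset_cball holomorphic_on_subset by blast
    qed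
    have ul: "uniform_limit (cball 0 (R/8)) F (\<lambda>h. Dg (p + cscale h ez) u) (at 0)"
      unfolding uniform_limit_iff
    proof (intro allI impI)
      fix e :: real assume e: "e > 0"
      define d where "d = min (R/8) (e * R^2 / (1024 * M))"
      have d: "d > 0" using R M e by (simp add: d_def)
      show "\<forall>\<^sub>F t in at 0. \<forall>h\<in>cball 0 (R/8). dist (F t h) (Dg (p + cscale h ez) u) < e"
        unfolding eventually_at
      proof (intro exI[of _ d] conjI ballI impI)
        show "d > 0" by fact
        fix t :: complex and h :: complex
        assume "t \<noteq> 0 \<and> dist t 0 < d" and h: "h \<in> cball 0 (R/8)"
        then have t: "t \<noteq> 0" "cmod t < d" by auto
        have q: "norm (p + cscale h ez) < R/2" using nq h by (simp add: mem_cball_0)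
        have B: "cmod (g (p + cscale h ez + cscale t u) - g (p + cscale h ez) - Dg (p + cscale h ez) u * t)
                 \<le> 512 * M * (cmod t)^2 / R^2"
          by (rule stepB[OF q u]) (use t d_def in simp)
        have "F t h - Dg (p + cscale h ez) u
              = (g (p + cscale h ez + cscale t u) - g (p + cscale h ez) - Dg (p + cscale h ez) u * t) / t"
          using t by (simp add: F_def field_simps)
        then have "dist (F t h) (Dg (p + cscale h ez) u)
              = cmod (g (p + cscale h ez + cscale t u) - g (p + cscale h ez) - Dg (p + cscale h ez) u * t) / cmod t"
          by (simp add: dist_norm norm_divide)
        also have "\<dots> \<le> 512 * M * (cmod t)^2 / R^2 / cmod t"
          using B t divide_right_mono[OF B, of "cmod t"] by simp
        also have "\<dots> = 512 * M * cmod t / R^2"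
          using t by (simp add: power2_eq_square)
        also have "\<dots> < e"
        proof -
          have "cmod t < e * R^2 / (1024 * M)" using t d_def by simp
          then have "512 * M * cmod t < 512 * M * (e * R^2 / (1024 * M))"
            using M by (intro mult_strict_left_mono) auto
          also have "\<dots> = e * R^2 / 2" using M by (simp add: field_simps)
          finally have "512 * M * cmod t < e * R^2 / 2" .
          then have "512 * M * cmod t / R^2 < e * R^2 / 2 / R^2"
            using R by (intro divide_strict_right_mono) auto
          also have "\<dots> = e / 2" using R by (simp add: field_simps)
          finally show ?thesis using e by linarith
        qed
        finally show "dist (F t h) (Dg (p + cscale h ez) u) < e" .
      qed
    qed
    show ?thesis
      by (rule holomorphic_uniform_limit[OF ev ul]) (auto simp: trivial_limit_at)
  qed
  define K where "K = 8192 * M / R^3"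
  define g' where "g' p u = deriv (\<lambda>h. Dg (p + cscale h ez) u) 0" for p u
  have stepE: "cmod ((Dg (p + cscale h ez) u - Dg p u) / h - g' p u) \<le> K * cmod h"
    if p: "norm p < R/4" and u: "norm u \<le> 1" and h: "h \<noteq> 0" "cmod h \<le> R/16" for p u h
  proof -
    define \<phi> where "\<phi> h = Dg (p + cscale h ez) u" for h
    have hol: "\<phi> holomorphic_on ball 0 (R/8)" unfolding \<phi>_def by (rule stepC[OF p u])
    have T: "cmod (\<phi> h - \<phi> 0 - deriv \<phi> 0 * (h - 0)) \<le> 32 * (4 * M / R) * cmod (h - 0)^2 / (R/8)^2"
    proof (rule taylor1[OF hol])
      show "0 < R/8" using R by simp
      show "cmod (h - 0) \<le> R / 8 / 2" using h by simp
      fix x :: complex assume "x \<in> ball 0 (R/8)"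
      then have "norm (p + cscale x ez) < R/2"
        using norm_line_le[of p x ez] p R by (simp add: mem_ball_0)
      then show "cmod (\<phi> x) \<le> 4 * M / R" unfolding \<phi>_def by (rule stepA[OF _ u])
    qed
    have "32 * (4 * M / R) * cmod (h - 0)^2 / (R/8)^2 = K * cmod h * cmod h"
      using R by (simp add: K_def power2_eq_square power3_eq_cube field_simps)
    with T have T': "cmod (\<phi> h - \<phi> 0 - deriv \<phi> 0 * h) \<le> K * cmod h * cmod h" by simp
    have "(\<phi> h - \<phi> 0) / h - deriv \<phi> 0 = (\<phi> h - \<phi> 0 - deriv \<phi> 0 * h) / h"
      using h by (simp add: field_simps)
    then have "cmod ((\<phi> h - \<phi> 0) / h - deriv \<phi> 0) = cmod (\<phi> h - \<phi> 0 - deriv \<phi> 0 * h) / cmod h"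
      by (simp add: norm_divide)
    also have "\<dots> \<le> K * cmod h * cmod h / cmod h"
      using T' by (rule divide_right_mono) simp
    also have "\<dots> = K * cmod h" using h by simp
    moreover have "\<phi> = (\<lambda>h. Dg (p + cscale h ez) u)" by (simp add: \<phi>_def fun_eq_iff)
    ultimately show ?thesis by (simp add: \<phi>_def g'_def)
  qed
  have scal: "Dg q (cscale c u) = c * Dg q u" if "q \<in> U" for q c u
    using cdD[OF that] unfolding cdiffat_def by blast
  have qU2: "p + cscale h ez \<in> U" if p: "norm p < R/4" and h: "cmod h < R/8" for p h
  proof -
    have "norm (p + cscale h ez) < R/2" using norm_line_le[of p h ez] p h R by simp
    then show ?thesis by (rule qU)
  qed
  have Dg0: "Dg q 0 = 0" if "q \<in> U" for q
    using cdiffat_0[OF cdD[OF that]] .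
  have decomp: "\<exists>u1. norm u1 = 1 \<and> u = cscale (complex_of_real (norm u)) u1" if "u \<noteq> 0" for u :: "'m pt"
  proof (intro exI conjI)
    show "norm (cscale (complex_of_real (1 / norm u)) u) = 1"
      using that by (simp add: norm_cscale norm_divide)
    show "u = cscale (complex_of_real (norm u)) (cscale (complex_of_real (1 / norm u)) u)"
      using that by (simp add: cscale_mult flip: of_real_mult)
  qed
  have holo_all: "(\<lambda>h. Dg (p + cscale h ez) u) holomorphic_on ball 0 (R/8)"
    if p: "norm p < R/4" for p u
  proof (cases "u = 0")
    case True
    have "(\<lambda>h. 0) holomorphic_on ball 0 (R/8)" by simp
    then show ?thesis
      by (rule holomorphic_transform) (simp add: True Dg0 qU2[OF p] mem_ball_0)
  next
    case False
    then obtain u1 where u1: "norm u1 = 1" "u = cscale (complex_of_real (norm u)) u1" using decomp by blast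
    have "(\<lambda>h. complex_of_real (norm u) * Dg (p + cscale h ez) u1) holomorphic_on ball 0 (R/8)"
      using stepC[OF p, of u1] u1 by (intro holomorphic_intros) auto
    then show ?thesis
      by (rule holomorphic_transform) (metis scal qU2[OF p] mem_ball_0 u1(2))
  qed
  have diff0: "(\<lambda>h. Dg (p + cscale h ez) u) field_differentiable at 0"
    if p: "norm p < R/4" for p u
    by (rule holomorphic_on_imp_differentiable_at[OF holo_all[OF p, of u]]) (use R in auto)
  have g'lin: "g' p (cscale c u) = c * g' p u" if p: "norm p < R/4" for p c u
  proof -
    have ev: "\<forall>\<^sub>F h in nhds 0. Dg (p + cscale h ez) (cscale c u) = c * Dg (p + cscale h ez) u"
    proof (rule eventually_mono[OF eventually_nhds_in_open[of "ball 0 (R/8)"]])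
      show "open (ball (0::complex) (R/8))" by simp
      show "(0::complex) \<in> ball 0 (R/8)" using R by simp
      fix h :: complex assume "h \<in> ball 0 (R/8)"
      then show "Dg (p + cscale h ez) (cscale c u) = c * Dg (p + cscale h ez) u"
        using scal qU2[OF p] by (simp add: mem_ball_0)
    qed
    have "g' p (cscale c u) = deriv (\<lambda>h. c * Dg (p + cscale h ez) u) 0"
      unfolding g'_def by (rule deriv_cong_ev[OF ev refl])
    also have "\<dots> = c * g' p u"
      unfolding g'_def by (rule deriv_cmult[OF diff0[OF p]])
    finally show ?thesis .
  qed
  have stepF: "cmod ((Dg (p + cscale h ez) u - Dg p u) / h - g' p u) \<le> K * cmod h * norm u"
    if p: "norm p < R/4" and h: "h \<noteq> 0" "cmod h \<le> R/16" for p u h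
  proof (cases "u = 0")
    case True
    have pU: "p \<in> U" using qU p R by simp
    have hU: "p + cscale h ez \<in> U" using qU2[OF p] h R by simp
    have "g' p 0 = 0" using g'lin[OF p, of 0 0] by simp
    then show ?thesis using True cdiffat_0[OF cdD[OF pU]] cdiffat_0[OF cdD[OF hU]] by simp
  next
    case False
    then obtain u1 where u1: "norm u1 = 1" "u = cscale (complex_of_real (norm u)) u1" using decomp by blast
    have pU: "p \<in> U" using qU p R by simp
    have hU: "p + cscale h ez \<in> U" using qU2[OF p] h R by simp
    have "(Dg (p + cscale h ez) u - Dg p u) / h - g' p u
        = complex_of_real (norm u) * ((Dg (p + cscale h ez) u1 - Dg p u1) / h - g' p u1)"
      apply (subst (1 2 3) u1(2))
      using scal[OF pU] scal[OF hU] g'lin[OF p] by (simp add: algebra_simps diff_divide_distrib)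
    then have "cmod ((Dg (p + cscale h ez) u - Dg p u) / h - g' p u)
        = norm u * cmod ((Dg (p + cscale h ez) u1 - Dg p u1) / h - g' p u1)"
      by (simp add: norm_mult)
    also have "\<dots> \<le> norm u * (K * cmod h)"
      using stepE[OF p _ h, of u1] u1 by (intro mult_left_mono) auto
    finally show ?thesis by (simp add: mult_ac)
  qed
  define S where "S = ball (0::'m pt) (R/4)"
  define hs where "hs n = complex_of_real (R / (16 * (real n + 1)))" for n
  define fs where "fs n p = (g (p + cscale (hs n) ez) - g p) / hs n" for n p
  define fs' where "fs' n p u = (Dg (p + cscale (hs n) ez) u - Dg p u) / hs n" for n p u
  have hs: "hs n \<noteq> 0" "cmod (hs n) \<le> R/16" for n
  proof -
    have pos: "R / (16 * (real n + 1)) > 0" using R by simp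
    then show "hs n \<noteq> 0" unfolding hs_def by (metis of_real_eq_0_iff less_irrefl)
    have "R / (16 * (real n + 1)) \<le> R / 16"
      using R by (intro divide_left_mono) auto
    then show "cmod (hs n) \<le> R/16" using pos unfolding hs_def norm_of_real by linarith
  qed
  have hs_lim: "filterlim hs (at 0) sequentially"
  proof (rule filterlim_atI)
    have "(\<lambda>n. (R/16) * inverse (real (Suc n))) \<longlonglongrightarrow> 0"
      by (rule tendsto_mult_right_zero[OF LIMSEQ_inverse_real_of_nat])
    moreover have "(\<lambda>n. (R/16) * inverse (real (Suc n))) = (\<lambda>n. R / (16 * (real n + 1)))"
      by (simp add: fun_eq_iff field_simps)
    ultimately have "(\<lambda>n. R / (16 * (real n + 1))) \<longlonglongrightarrow> 0" by metis
    from tendsto_of_real[OF this, where 'a=complex] show "hs \<longlonglongrightarrow> 0"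
      by (simp add: hs_def[abs_def])
    show "\<forall>\<^sub>F n in sequentially. hs n \<noteq> 0" using hs by simp
  qed
  have derf: "(fs n has_derivative fs' n p) (at p within S)" if pS: "p \<in> S" for n p
  proof -
    have p: "norm p < R/4" using pS by (simp add: S_def)
    have pU: "p \<in> U" using qU p R by simp
    have hU: "p + cscale (hs n) ez \<in> U" using qU2[OF p] hs[of n] R by simp
    have d0: "(g has_derivative Dg p) (at p)" using cdD[OF pU] by (simp add: cdiffat_def)
    have "((g \<circ> (\<lambda>p. p + cscale (hs n) ez)) has_derivative (Dg (p + cscale (hs n) ez) \<circ> (\<lambda>x. x))) (at p)"
      by (rule diff_chain_at) (use cdD[OF hU] in \<open>auto simp: cdiffat_def intro!: derivative_eq_intros\<close>)
    then have d1: "((\<lambda>p. g (p + cscale (hs n) ez)) has_derivative Dg (p + cscale (hs n) ez)) (at p)"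
      by (simp add: o_def)
    have "(fs n has_derivative fs' n p) (at p)"
      unfolding fs_def[abs_def] fs'_def
      by (intro derivative_eq_intros) (auto simp: hs intro: d0 d1)
    then show ?thesis by (rule has_derivative_at_withinI)
  qed
  have nle: "\<forall>\<^sub>F n in sequentially. \<forall>p\<in>S. \<forall>u. norm (fs' n p u - g' p u) \<le> e * norm u"
    if e: "e > 0" for e
  proof -
    have K: "K > 0" using M R by (simp add: K_def)
    obtain N :: nat where N: "K * R / e < real N" using reals_Archimedean2 by blast
    show ?thesis unfolding eventually_sequentially
    proof (intro exI[of _ N] allI impI ballI)
      fix n p u assume n: "N \<le> n" and pS: "p \<in> S"
      have p: "norm p < R/4" using pS by (simp add: S_def)
      have "cmod (hs n) = R / (16 * (real n + 1))"
        using R unfolding hs_def norm_of_real by simp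
      moreover have "K * (R / (16 * (real n + 1))) \<le> e"
      proof -
        have "K * R < e * real N" using N e by (simp add: field_simps)
        also have "\<dots> \<le> e * (16 * (real n + 1))" using n e by (intro mult_left_mono) auto
        finally show ?thesis using e by (simp add: field_simps)
      qed
      ultimately have Kh: "K * cmod (hs n) \<le> e" by simp
      have "cmod (fs' n p u - g' p u) \<le> K * cmod (hs n) * norm u"
        unfolding fs'_def by (rule stepF[OF p hs])
      also have "\<dots> \<le> e * norm u" using Kh by (intro mult_right_mono) auto
      finally show "norm (fs' n p u - g' p u) \<le> e * norm u" by simp
    qed
  qed
  have ptw: "(\<lambda>n. fs n p) \<longlonglongrightarrow> Dg p ez" if pS: "p \<in> S" for p
  proof -
    have p: "norm p < R/4" using pS by (simp add: S_def)
    have pU: "p \<in> U" using qU p R by simp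
    have "((\<lambda>t. g (p + cscale t ez)) has_field_derivative Dg p ez) (at 0)"
      by (rule line_field_deriv) (use cdD[OF pU] in simp)
    then have "((\<lambda>h. (g (p + cscale (0 + h) ez) - g (p + cscale 0 ez)) / h) \<longlongrightarrow> Dg p ez) (at 0)"
      unfolding DERIV_def .
    from filterlim_compose[OF this hs_lim] show ?thesis
      by (simp add: fs_def)
  qed
  have "0 \<in> S" using R by (simp add: S_def)
  have "convex S" by (simp add: S_def)
  have "open S" by (simp add: S_def)
  obtain G where G: "\<And>p. p \<in> S \<Longrightarrow> (\<lambda>n. fs n p) \<longlonglongrightarrow> G p \<and> (G has_derivative g' p) (at p within S)"
    using has_derivative_sequence[OF \<open>convex S\<close> derf nle \<open>0 \<in> S\<close> ptw[OF \<open>0 \<in> S\<close>]]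
    by blast
  have "\<forall>p\<in>S. \<exists>D. cdiffat (\<lambda>q. dirderiv g q ez) p D"
  proof
    fix p assume pS: "p \<in> S"
    have SU: "S \<subseteq> U" using R by (auto simp: S_def)
    have "(G has_derivative g' p) (at p)"
      using G[OF pS] at_within_open[OF pS \<open>open S\<close>] by simp
    moreover have "G q = dirderiv g q ez" if "q \<in> S" for q
      using G[OF that] ptw[OF that] LIMSEQ_unique dirderiv_eq[OF cdD] SU that by (metis subsetD)
    ultimately have "((\<lambda>q. dirderiv g q ez) has_derivative g' p) (at p)"
      using has_derivative_transform_within_open[of G "g' p" p UNIV S] pS by (simp add: S_def)
    moreover have "\<forall>c v. g' p (cscale c v) = c * g' p v"
      using g'lin pS by (simp add: S_def)
    ultimately show "\<exists>D. cdiffat (\<lambda>q. dirderiv g q ez) p D"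
      unfolding cdiffat_def by blast
  qed
  then show ?thesis using \<open>0 \<in> S\<close> \<open>open S\<close> by blast
qed

lemma cd_const: "cdiffat (\<lambda>q. c) p (\<lambda>w. 0)"
  unfolding cdiffat_def by (auto intro!: derivative_eq_intros)

lemma cd_fst: "cdiffat (\<lambda>q. fst q) p (\<lambda>w. fst w)"
  unfolding cdiffat_def by (auto simp: cscale_def intro!: derivative_eq_intros)

lemma cd_add: "cdiffat f p Df \<Longrightarrow> cdiffat g p Dg \<Longrightarrow> cdiffat (\<lambda>q. f q + g q) p (\<lambda>w. Df w + Dg w)"
  unfolding cdiffat_def by (auto simp: algebra_simps intro!: derivative_eq_intros)

lemma cd_diff: "cdiffat f p Df \<Longrightarrow> cdiffat g p Dg \<Longrightarrow> cdiffat (\<lambda>q. f q - g q) p (\<lambda>w. Df w - Dg w)"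
  unfolding cdiffat_def by (auto simp: algebra_simps intro!: derivative_eq_intros)

lemma cd_mult: "cdiffat f p Df \<Longrightarrow> cdiffat g p Dg \<Longrightarrow> cdiffat (\<lambda>q. f q * g q) p (\<lambda>w. Df w * g p + f p * Dg w)"
  unfolding cdiffat_def by (auto simp: algebra_simps intro!: derivative_eq_intros)

lemma cd_sum: "finite A \<Longrightarrow> (\<And>i. i \<in> A \<Longrightarrow> cdiffat (F i) p (DF i)) \<Longrightarrow>
    cdiffat (\<lambda>q. \<Sum>i\<in>A. F i q) p (\<lambda>w. \<Sum>i\<in>A. DF i w)"
proof (induction A rule: finite_induct)
  case empty then show ?case using cd_const[of 0 p] by simp
next
  case (insert x A) then show ?case using cd_add[of "F x" p] by simp
qed

lemma holo_germ_iff: "holo_germ g \<longleftrightarrow> (\<exists>U. open U \<and> 0 \<in> U \<and> (\<forall>p\<in>U. \<exists>D. cdiffat g p D))"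
  unfolding holo_germ_def cdiffat_def by blast

lemma holo_dirderiv: "holo_germ g \<Longrightarrow> holo_germ (\<lambda>p. dirderiv g p ez)"
  unfolding holo_germ_iff using deriv_holo_main by blast

lemma holo_binop:
  assumes "holo_germ f" "holo_germ g"
    and rule: "\<And>p Df Dg. cdiffat f p Df \<Longrightarrow> cdiffat g p Dg \<Longrightarrow> \<exists>D. cdiffat (\<lambda>q. F (f q) (g q)) p D"
  shows "holo_germ (\<lambda>q. F (f q) (g q))"
proof -
  obtain U1 U2 where U: "open U1" "0 \<in> U1" "\<forall>p\<in>U1. \<exists>D. cdiffat f p D"
    "open U2" "0 \<in> U2" "\<forall>p\<in>U2. \<exists>D. cdiffat g p D"
    using assms(1,2) unfolding holo_germ_iff by metis
  show ?thesis unfolding holo_germ_iff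
    by (rule exI[of _ "U1 \<inter> U2"]) (use U rule in blast)
qed

lemma holo_mult: "holo_germ f \<Longrightarrow> holo_germ g \<Longrightarrow> holo_germ (\<lambda>q. f q * g q)"
  by (rule holo_binop) (use cd_mult in blast)+

lemma holo_diff: "holo_germ f \<Longrightarrow> holo_germ g \<Longrightarrow> holo_germ (\<lambda>q. f q - g q)"
  by (rule holo_binop) (use cd_diff in blast)+

lemma holo_add: "holo_germ f \<Longrightarrow> holo_germ g \<Longrightarrow> holo_germ (\<lambda>q. f q + g q)"
  by (rule holo_binop) (use cd_add in blast)+

lemma holo_const: "holo_germ (\<lambda>q. c)"
  unfolding holo_germ_iff using cd_const by blast

lemma holo_fst: "holo_germ (\<lambda>q. fst q)"
  unfolding holo_germ_iff using cd_fst by blast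

lemma holo_sum: "finite A \<Longrightarrow> (\<And>i. i \<in> A \<Longrightarrow> holo_germ (F i)) \<Longrightarrow> holo_germ (\<lambda>q. \<Sum>i\<in>A. F i q)"
proof (induction A rule: finite_induct)
  case empty then show ?case using holo_const[of 0] by simp
next
  case (insert x A) then show ?case using holo_add[of "F x"] by simp
qed

lemma holo_common:
  fixes F :: "'i::finite \<Rightarrow> 'm::finite pt \<Rightarrow> complex"
  assumes "\<And>i. holo_germ (F i)"
  shows "\<exists>U. open U \<and> 0 \<in> U \<and> (\<forall>p\<in>U. \<forall>i. \<exists>D. cdiffat (F i) p D)"
proof -
  obtain Us where Us: "\<And>i. open (Us i) \<and> 0 \<in> Us i \<and> (\<forall>p\<in>Us i. \<exists>D. cdiffat (F i) p D)"
    using assms unfolding holo_germ_iff by metis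
  show ?thesis
    by (rule exI[of _ "\<Inter>(range Us)"]) (use Us in auto)
qed

lemma card1_sets: "{I. I \<subseteq> {..<n} \<and> card I = 1} = (\<lambda>i. {i}) ` {..<(n::nat)}"
  by (auto simp: card_1_singleton_iff)

lemma wedge1_gen: "wedge 1 \<alpha> \<beta> p vs = (\<Sum>i<length vs. (-1)^i * \<alpha> p (nths vs {i}) * \<beta> p (nths vs (-{i})))"
  unfolding wedge_def card1_sets
  by (subst sum.reindex) (auto simp: inj_on_def)

lemma wedge1_3: "wedge 1 \<alpha> \<beta> p [x0, x1, x2] =
   \<alpha> p [x0] * \<beta> p [x1, x2] - \<alpha> p [x1] * \<beta> p [x0, x2] + \<alpha> p [x2] * \<beta> p [x0, x1]"
  unfolding wedge1_gen by (simp add: numeral_3_eq_3 lessThan_Suc nths_Cons)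

lemma wedge1_2: "wedge 1 \<alpha> \<beta> p [x0, x1] = \<alpha> p [x0] * \<beta> p [x1] - \<alpha> p [x1] * \<beta> p [x0]"
  unfolding wedge1_gen by (simp add: numeral_2_eq_2 lessThan_Suc nths_Cons)

lemma extd_2: "ext_d \<alpha> p [x0, x1] = dirderiv (\<lambda>q. \<alpha> q [x1]) p x0 - dirderiv (\<lambda>q. \<alpha> q [x0]) p x1"
  unfolding ext_d_def by (simp add: numeral_2_eq_2 lessThan_Suc nths_Cons)

lemma extd_1: "ext_d \<alpha> p [x0] = dirderiv (\<lambda>q. \<alpha> q []) p x0"
  unfolding ext_d_def by (simp add: nths_Cons)

lemma cd_eq: "cdiffat g p D \<Longrightarrow> g = g' \<Longrightarrow> (\<And>w. D w = D' w) \<Longrightarrow> cdiffat g' p D'"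
  unfolding cdiffat_def
proof -
  assume "(g has_derivative D) (at p) \<and> (\<forall>c v. D (cscale c v) = c * D v)" "g = g'" "\<And>w. D w = D' w"
  moreover then have "D = D'" by auto
  ultimately show "(g' has_derivative D') (at p) \<and> (\<forall>c v. D' (cscale c v) = c * D' v)" by simp
qed

lemma snd_cscale_ez[simp]: "snd (cscale t (ez :: 'm::finite pt)) = 0"
  by (simp add: cscale_def ez_def vec_eq_iff)

lemma fst_ez[simp]: "fst (ez :: 'm::finite pt) = 1" and snd_ez[simp]: "snd (ez :: 'm::finite pt) = 0"
  by (simp_all add: ez_def)

lemma pointwise:
  fixes a :: "'m::{finite,linorder} \<Rightarrow> (complex, 'm) vec \<Rightarrow> complex"
    and b :: "'m \<Rightarrow> 'm pt \<Rightarrow> complex"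
    and f :: "'m pt \<Rightarrow> complex"
    and s :: "'m \<Rightarrow> 'm pt \<Rightarrow> complex"
  assumes \<omega>_def: "\<omega> = (\<lambda>p vs. fst (hd vs) + (\<Sum>i\<in>UNIV. (a i (snd p) + fst p * b i p) * (snd (hd vs) $ i)))"
    and X_def: "X = (\<lambda>p. (f p - (\<Sum>i\<in>UNIV. s i p * (a i (snd p) + fst p * b i p)), \<chi> i. s i p))"
    and cf: "cdiffat f p Df" and cs: "\<And>i. cdiffat (s i) p (Ds i)" and cb: "\<And>i. cdiffat (b i) p (Db i)"
    and cA: "\<And>i. cdiffat (\<lambda>q. a i (snd q)) p (DA i)"
  shows "lie1 X \<omega> p [v] = dirderiv f p v + ext_d \<omega> p [X p, v]"
    and "\<omega> p [X p] = f p" and "\<omega> p [ez] = 1"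
    and "lie1 X \<omega> p [ez] = dirderiv f p ez - (\<Sum>m\<in>UNIV. s m p * b m p)
                          - fst p * (\<Sum>m\<in>UNIV. s m p * dirderiv (b m) p ez)"
proof -
  define c where "c i = a i (snd p) + fst p * b i p" for i
  define W where "W i w = DA i w + fst w * b i p + fst p * Db i w" for i w
  have c\<omega>: "cdiffat (\<lambda>q. \<omega> q [u]) p (\<lambda>w. \<Sum>i\<in>UNIV. W i w * snd u $ i)" for u
  proof (rule cd_eq)
    show "cdiffat (\<lambda>q. fst u + (\<Sum>i\<in>UNIV. (a i (snd q) + fst q * b i q) * snd u $ i)) p
      (\<lambda>w. 0 + (\<Sum>i\<in>UNIV. (DA i w + (fst w * b i p + fst p * Db i w)) * snd u $ i + (a i (snd p) + fst p * b i p) * 0))"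
      apply (rule cd_add)
       apply (rule cd_const)
      apply (rule cd_sum)
       apply simp
      apply (rule cd_mult)
       apply (rule cd_add)
        apply (rule cA)
       apply (rule cd_mult)
        apply (rule cd_fst)
       apply (rule cb)
      apply (rule cd_const)
      done
    show "(\<lambda>q. fst u + (\<Sum>i\<in>UNIV. (a i (snd q) + fst q * b i q) * snd u $ i)) = (\<lambda>q. \<omega> q [u])"
      by (simp add: \<omega>_def)
  qed (simp add: W_def algebra_simps)
  have cX1: "cdiffat (\<lambda>q. fst (X q)) p (\<lambda>w. Df w - (\<Sum>i\<in>UNIV. Ds i w * c i + s i p * W i w))"
  proof (rule cd_eq)
    show "cdiffat (\<lambda>q. f q - (\<Sum>i\<in>UNIV. s i q * (a i (snd q) + fst q * b i q))) p
      (\<lambda>w. Df w - (\<Sum>i\<in>UNIV. Ds i w * (a i (snd p) + fst p * b i p) + s i p * (DA i w + (fst w * b i p + fst p * Db i w))))"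
      apply (rule cd_diff)
       apply (rule cf)
      apply (rule cd_sum)
       apply simp
      apply (rule cd_mult)
       apply (rule cs)
       apply (rule cd_add)
        apply (rule cA)
       apply (rule cd_mult)
        apply (rule cd_fst)
       apply (rule cb)
      done
    show "(\<lambda>q. f q - (\<Sum>i\<in>UNIV. s i q * (a i (snd q) + fst q * b i q))) = (\<lambda>q. fst (X q))"
      by (simp add: X_def)
  qed (simp add: W_def c_def algebra_simps)
  have dX2: "dirderiv (\<lambda>q. snd (X q) $ i) p w = Ds i w" for i w
    using dirderiv_eq[OF cs[of i]] by (simp add: X_def)
  have vf: "vfderiv X p w = (Df w - (\<Sum>i\<in>UNIV. Ds i w * c i + s i p * W i w), \<chi> i. Ds i w)" for w
    unfolding vfderiv_def dX2 dirderiv_eq[OF cX1] ..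
  have \<omega>p: "\<omega> p [u] = fst u + (\<Sum>i\<in>UNIV. c i * snd u $ i)" for u
    by (simp add: \<omega>_def c_def)
  have Xp: "X p = (f p - (\<Sum>i\<in>UNIV. s i p * c i), \<chi> i. s i p)"
    by (simp add: X_def c_def)
  have lie: "lie1 X \<omega> p [u] = (\<Sum>i\<in>UNIV. W i (X p) * snd u $ i) + \<omega> p [vfderiv X p u]" for u
    unfolding lie1_def dirderiv_eq[OF c\<omega>] by simp
  show "lie1 X \<omega> p [v] = dirderiv f p v + ext_d \<omega> p [X p, v]"
    unfolding lie extd_2 dirderiv_eq[OF c\<omega>] dirderiv_eq[OF cf] \<omega>p vf
    by (simp add: Xp sum.distrib sum_subtractf algebra_simps)
  show "\<omega> p [X p] = f p"
    unfolding \<omega>p by (simp add: Xp mult.commute)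
  show "\<omega> p [ez] = 1"
    unfolding \<omega>p by simp
  have DA0: "DA i ez = 0" for i
  proof -
    have "DA i ez = dirderiv (\<lambda>q. a i (snd q)) p ez" using dirderiv_eq[OF cA[of i]] by simp
    also have "\<dots> = 0" by (simp add: dirderiv_def)
    finally show ?thesis .
  qed
  show "lie1 X \<omega> p [ez] = dirderiv f p ez - (\<Sum>m\<in>UNIV. s m p * b m p)
                          - fst p * (\<Sum>m\<in>UNIV. s m p * dirderiv (b m) p ez)"
    unfolding lie \<omega>p vf dirderiv_eq[OF cf] dirderiv_eq[OF cb]
    by (simp add: W_def DA0 sum.distrib sum_subtractf sum_distrib_left algebra_simps)
qed

lemma alg: fixes F B W C Dv Dz :: complex
  shows "(F - B + W*C = F + (Dv - W*Dz)) \<longleftrightarrow> (Dv + B = W*(Dz + C))"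
proof -
  have "(F - B + W*C) - (F + (Dv - W*Dz)) = - ((Dv + B) - W*(Dz + C))" by (simp add: algebra_simps)
  then show ?thesis by (metis eq_iff_diff_eq_0 neg_equal_0_iff_equal)
qed

theorem lemma3p2:
  fixes k :: nat
    and a :: "'m::{finite,linorder} \<Rightarrow> (complex, 'm) vec \<Rightarrow> complex"
    and b :: "'m::{finite,linorder} \<Rightarrow> 'm pt \<Rightarrow> complex"
    and f :: "'m::{finite,linorder} pt \<Rightarrow> complex"
    and s :: "'m::{finite,linorder} \<Rightarrow> 'm pt \<Rightarrow> complex"
  defines "\<omega> \<equiv> (\<lambda>p vs. fst (hd vs) + (\<Sum>i\<in>UNIV. (a i (snd p) + fst p * b i p) * (snd (hd vs) $ i)))"
    and "X \<equiv> (\<lambda>p. (f p - (\<Sum>i\<in>UNIV. s i p * (a i (snd p) + fst p * b i p)), \<chi> i. s i p))"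
    and "Z \<equiv> (\<lambda>p. ez)"
  assumes "k \<ge> 1"
    and "CARD('m::{finite,linorder}) = 2 * k"
    and "\<forall>i. holo_germ (\<lambda>p. a i (snd p))"
    and "\<forall>i. holo_germ (b i)"
    and "holo_germ f"
    and "\<forall>i. holo_germ (s i)"
    and "sing_contact_first_type_S k \<omega>"
  shows "((\<exists>h. holo_germ h \<and> germ_eq 1 (lie1 X \<omega>) (fscale h \<omega>)) \<longleftrightarrow>
            germ_eq 1 (iprod Z (iprod X (wedge 1 \<omega> (ext_d \<omega>))))
                      (iprod Z (fadd (fscale f (ext_d \<omega>)) (wedge 1 \<omega> (ext_d (zero_form_of f))))))
       \<and> ((\<exists>h. holo_germ h \<and> germ_eq 1 (lie1 X \<omega>) (fscale h \<omega>)) \<longrightarrow>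
            germ_eq 1 (lie1 X \<omega>)
              (fscale (\<lambda>p. dirderiv f p ez - (\<Sum>m\<in>UNIV. s m p * b m p)
                          - fst p * (\<Sum>m\<in>UNIV. s m p * dirderiv (b m) p ez)) \<omega>))"
proof -
  define A where "A i q = a i (snd q)" for i and q :: "'m pt"
  define hF where "hF p = dirderiv f p ez - (\<Sum>m\<in>UNIV. s m p * b m p)
                          - fst p * (\<Sum>m\<in>UNIV. s m p * dirderiv (b m) p ez)" for p
  have hA: "\<And>i. holo_germ (A i)" using assms(6) by (simp add: A_def[abs_def])
  have "\<exists>U. open U \<and> 0 \<in> U \<and> (\<forall>p\<in>U. \<forall>i. \<exists>D. cdiffat (A i) p D)"
    by (rule holo_common) (rule hA)
  then obtain U1 where U1: "open U1" "0 \<in> U1" "\<forall>p\<in>U1. \<forall>i. \<exists>D. cdiffat (A i) p D"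
    by (elim exE conjE) (rule that)
  obtain U2 where U2: "open U2" "0 \<in> U2" "\<forall>p\<in>U2. \<forall>i. \<exists>D. cdiffat (b i) p D"
    using holo_common[of b, OF assms(7)[rule_format]] by blast
  obtain U3 where U3: "open U3" "0 \<in> U3" "\<forall>p\<in>U3. \<forall>i. \<exists>D. cdiffat (s i) p D"
    using holo_common[of s, OF assms(9)[rule_format]] by blast
  obtain U4 where U4: "open U4" "0 \<in> U4" "\<forall>p\<in>U4. \<exists>D. cdiffat f p D"
    using assms(8) unfolding holo_germ_iff by blast
  define U where "U = U1 \<inter> U2 \<inter> U3 \<inter> U4"
  have U: "open U" "0 \<in> U" using U1(1,2) U2(1,2) U3(1,2) U4(1,2) by (auto simp: U_def)
  have PW: "lie1 X \<omega> p [v] = dirderiv f p v + ext_d \<omega> p [X p, v]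
    \<and> \<omega> p [X p] = f p \<and> \<omega> p [ez] = 1 \<and> lie1 X \<omega> p [ez] = hF p" if "p \<in> U" for p v
  proof -
    have pU: "p \<in> U1" "p \<in> U2" "p \<in> U3" "p \<in> U4" using that by (simp_all add: U_def)
    have cf: "cdiffat f p (Dof f p)" by (rule Dof) (use U4(3) pU in blast)
    have cs: "\<And>i. cdiffat (s i) p (Dof (s i) p)" by (rule Dof) (use U3(3) pU in blast)
    have cb: "\<And>i. cdiffat (b i) p (Dof (b i) p)" by (rule Dof) (use U2(3) pU in blast)
    have cA: "\<And>i. cdiffat (\<lambda>q. a i (snd q)) p (Dof (A i) p)"
    proof -
      fix i
      have "cdiffat (A i) p (Dof (A i) p)" by (rule Dof) (use U1(3) pU in blast)
      moreover have "A i = (\<lambda>q. a i (snd q))" by (simp add: A_def fun_eq_iff)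
      ultimately show "cdiffat (\<lambda>q. a i (snd q)) p (Dof (A i) p)" by simp
    qed
    show ?thesis
      using pointwise[OF meta_eq_to_obj_eq[OF \<omega>_def] meta_eq_to_obj_eq[OF X_def] cf cs cb cA]
      by (simp add: hF_def)
  qed
  have IDp: "(iprod Z (iprod X (wedge 1 \<omega> (ext_d \<omega>))) p [v] =
              iprod Z (fadd (fscale f (ext_d \<omega>)) (wedge 1 \<omega> (ext_d (zero_form_of f)))) p [v])
           \<longleftrightarrow> lie1 X \<omega> p [v] = \<omega> p [v] * lie1 X \<omega> p [ez]" if "p \<in> U" for p v
  proof -
    have e1: "lie1 X \<omega> p [v] = dirderiv f p v + ext_d \<omega> p [X p, v]"
      and e2: "lie1 X \<omega> p [ez] = dirderiv f p ez + ext_d \<omega> p [X p, ez]"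
      and e3: "\<omega> p [X p] = f p" and e4: "\<omega> p [ez] = 1"
      using PW[OF that] by blast+
    have L: "iprod Z (iprod X (wedge 1 \<omega> (ext_d \<omega>))) p [v]
       = f p * ext_d \<omega> p [ez, v] - ext_d \<omega> p [X p, v] + \<omega> p [v] * ext_d \<omega> p [X p, ez]"
      unfolding iprod_def Z_def wedge1_3 e3 e4 by simp
    have R: "iprod Z (fadd (fscale f (ext_d \<omega>)) (wedge 1 \<omega> (ext_d (zero_form_of f)))) p [v]
       = f p * ext_d \<omega> p [ez, v] + (dirderiv f p v - \<omega> p [v] * dirderiv f p ez)"
      unfolding iprod_def Z_def fadd_def fscale_def wedge1_2 extd_1 zero_form_of_def e4 by simp
    show ?thesis unfolding L R e1 e2 by (rule alg)
  qed
  have len1: "\<exists>v. vs = [v]" if "length vs = 1" for vs :: "'m pt list"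
    using that by (cases vs) auto
  have hb: "holo_germ (b m)" and hs: "holo_germ (s m)" for m
    using assms(7,9) by blast+
  have h1: "holo_germ (\<lambda>p. dirderiv f p ez)" by (rule holo_dirderiv[OF assms(8)])
  have h2: "holo_germ (\<lambda>p. \<Sum>m\<in>UNIV. s m p * b m p)"
    by (rule holo_sum, simp, rule holo_mult[OF hs hb])
  have h3: "holo_germ (\<lambda>p. \<Sum>m\<in>UNIV. s m p * dirderiv (b m) p ez)"
    by (rule holo_sum, simp, rule holo_mult[OF hs holo_dirderiv[OF hb]])
  have holo_hF: "holo_germ hF"
  proof -
    have "holo_germ (\<lambda>p. dirderiv f p ez - (\<Sum>m\<in>UNIV. s m p * b m p)
                          - fst p * (\<Sum>m\<in>UNIV. s m p * dirderiv (b m) p ez))"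
      by (rule holo_diff[OF holo_diff[OF h1 h2] holo_mult[OF holo_fst h3]])
    then show ?thesis by (simp add: hF_def[abs_def])
  qed
  have fwd: "germ_eq 1 (lie1 X \<omega>) (fscale hF \<omega>)" and
    idt: "germ_eq 1 (iprod Z (iprod X (wedge 1 \<omega> (ext_d \<omega>))))
                      (iprod Z (fadd (fscale f (ext_d \<omega>)) (wedge 1 \<omega> (ext_d (zero_form_of f)))))"
    if h: "holo_germ h" "germ_eq 1 (lie1 X \<omega>) (fscale h \<omega>)" for h
  proof -
    obtain V where V: "open V" "0 \<in> V" "\<And>p vs. p \<in> V \<Longrightarrow> length vs = 1 \<Longrightarrow> lie1 X \<omega> p vs = h p * \<omega> p vs"
      using h(2) unfolding germ_eq_def fscale_def by blast
    have key: "lie1 X \<omega> p [v] = \<omega> p [v] * lie1 X \<omega> p [ez] \<and> lie1 X \<omega> p [v] = hF p * \<omega> p [v]"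
      if p: "p \<in> U \<inter> V" for p v
    proof -
      have pU: "p \<in> U" and pV: "p \<in> V" using p by auto
      have e: "lie1 X \<omega> p [ez] = hF p" "\<omega> p [ez] = 1" using PW[OF pU] by blast+
      have l1: "lie1 X \<omega> p [ez] = h p * \<omega> p [ez]" by (rule V(3)[OF pV]) simp
      have hh: "h p = hF p" using l1 e by simp
      have l2: "lie1 X \<omega> p [v] = h p * \<omega> p [v]" by (rule V(3)[OF pV]) simp
      show ?thesis using l2 hh e(1) by (simp add: mult.commute)
    qed
    show "germ_eq 1 (lie1 X \<omega>) (fscale hF \<omega>)"
      unfolding germ_eq_def fscale_def
    proof (intro exI[of _ "U \<inter> V"] conjI ballI allI impI)
      show "open (U \<inter> V)" using U(1) V(1) by (rule open_Int)
      show "0 \<in> U \<inter> V" using U(2) V(2) by simp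
      fix p and vs :: "'m pt list" assume p: "p \<in> U \<inter> V" and "length vs = 1"
      then obtain v where "vs = [v]" using len1 by blast
      then show "lie1 X \<omega> p vs = hF p * \<omega> p vs" using conjunct2[OF key[OF p, of v]] by simp
    qed
    show "germ_eq 1 (iprod Z (iprod X (wedge 1 \<omega> (ext_d \<omega>))))
                      (iprod Z (fadd (fscale f (ext_d \<omega>)) (wedge 1 \<omega> (ext_d (zero_form_of f)))))"
      unfolding germ_eq_def
    proof (intro exI[of _ "U \<inter> V"] conjI ballI allI impI)
      show "open (U \<inter> V)" using U(1) V(1) by (rule open_Int)
      show "0 \<in> U \<inter> V" using U(2) V(2) by simp
      fix p and vs :: "'m pt list" assume p: "p \<in> U \<inter> V" and "length vs = 1"
      then obtain v where "vs = [v]" using len1 by blast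
      then show "iprod Z (iprod X (wedge 1 \<omega> (ext_d \<omega>))) p vs =
       iprod Z (fadd (fscale f (ext_d \<omega>)) (wedge 1 \<omega> (ext_d (zero_form_of f)))) p vs" using conjunct1[OF key[OF p, of v]] IDp[of p v] p by simp
    qed
  qed
  have bwd: "germ_eq 1 (lie1 X \<omega>) (fscale hF \<omega>)"
    if I: "germ_eq 1 (iprod Z (iprod X (wedge 1 \<omega> (ext_d \<omega>))))
                      (iprod Z (fadd (fscale f (ext_d \<omega>)) (wedge 1 \<omega> (ext_d (zero_form_of f)))))"
  proof -
    obtain V where V: "open V" "0 \<in> V" "\<And>p vs. p \<in> V \<Longrightarrow> length vs = 1 \<Longrightarrow>
       iprod Z (iprod X (wedge 1 \<omega> (ext_d \<omega>))) p vs =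
       iprod Z (fadd (fscale f (ext_d \<omega>)) (wedge 1 \<omega> (ext_d (zero_form_of f)))) p vs"
      using I unfolding germ_eq_def by blast
    have key: "lie1 X \<omega> p [v] = hF p * \<omega> p [v]" if p: "p \<in> U \<inter> V" for p v
    proof -
      have pU: "p \<in> U" and pV: "p \<in> V" using p by auto
      have e: "lie1 X \<omega> p [ez] = hF p" using PW[OF pU] by blast
      have "lie1 X \<omega> p [v] = \<omega> p [v] * lie1 X \<omega> p [ez]"
        using IDp[OF pU, of v] V(3)[OF pV, of "[v]"] by simp
      then show ?thesis using e by (simp add: mult.commute)
    qed
    show ?thesis
      unfolding germ_eq_def fscale_def
    proof (intro exI[of _ "U \<inter> V"] conjI ballI allI impI)
      show "open (U \<inter> V)" using U(1) V(1) by (rule open_Int)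
      show "0 \<in> U \<inter> V" using U(2) V(2) by simp
      fix p and vs :: "'m pt list" assume p: "p \<in> U \<inter> V" and "length vs = 1"
      then obtain v where "vs = [v]" using len1 by blast
      then show "lie1 X \<omega> p vs = hF p * \<omega> p vs" using key[OF p, of v]  by simp
    qed
  qed
  have hF_eq: "hF = (\<lambda>p. dirderiv f p ez - (\<Sum>m\<in>UNIV. s m p * b m p)
                          - fst p * (\<Sum>m\<in>UNIV. s m p * dirderiv (b m) p ez))"
    by (simp add: hF_def fun_eq_iff)
  have G1: "(\<exists>h. holo_germ h \<and> germ_eq 1 (lie1 X \<omega>) (fscale h \<omega>)) \<longleftrightarrow>
            germ_eq 1 (iprod Z (iprod X (wedge 1 \<omega> (ext_d \<omega>))))
                      (iprod Z (fadd (fscale f (ext_d \<omega>)) (wedge 1 \<omega> (ext_d (zero_form_of f)))))"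
  proof
    assume "\<exists>h. holo_germ h \<and> germ_eq 1 (lie1 X \<omega>) (fscale h \<omega>)"
    then obtain h where "holo_germ h" "germ_eq 1 (lie1 X \<omega>) (fscale h \<omega>)" by blast
    then show "germ_eq 1 (iprod Z (iprod X (wedge 1 \<omega> (ext_d \<omega>))))
                      (iprod Z (fadd (fscale f (ext_d \<omega>)) (wedge 1 \<omega> (ext_d (zero_form_of f)))))"
      by (rule idt)
  next
    assume "germ_eq 1 (iprod Z (iprod X (wedge 1 \<omega> (ext_d \<omega>))))
                      (iprod Z (fadd (fscale f (ext_d \<omega>)) (wedge 1 \<omega> (ext_d (zero_form_of f)))))"
    then have "germ_eq 1 (lie1 X \<omega>) (fscale hF \<omega>)" by (rule bwd)
    then show "\<exists>h. holo_germ h \<and> germ_eq 1 (lie1 X \<omega>) (fscale h \<omega>)"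
      using holo_hF by blast
  qed
  have G2: "(\<exists>h. holo_germ h \<and> germ_eq 1 (lie1 X \<omega>) (fscale h \<omega>)) \<longrightarrow>
            germ_eq 1 (lie1 X \<omega>) (fscale hF \<omega>)"
  proof
    assume "\<exists>h. holo_germ h \<and> germ_eq 1 (lie1 X \<omega>) (fscale h \<omega>)"
    then obtain h where "holo_germ h" "germ_eq 1 (lie1 X \<omega>) (fscale h \<omega>)" by blast
    then show "germ_eq 1 (lie1 X \<omega>) (fscale hF \<omega>)" by (rule fwd)
  qed
  show ?thesis
    using G1 G2 unfolding hF_eq by (rule conjI)
qed

end
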